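(* For each $n\geq 1$, in $\mathbb{Z}[x_1,\dots,x_n]$ there is an equality of ideals \[ \langle h_1^n,h_2^n,\dots,h_n^n\rangle=\langle h_1^n,h_2^{n-1},h_3^{n-1},\dots,h_n^{n-1}\rangle . \]
   Context: For integers $0\leq a$ and $b\geq 1$, $h_a^b$ denotes the complete homogeneous symmetric polynomial of degree $a$ in the variables $x_1,\dots,x_b$, i.e. the sum of all monomials of degree $a$ in $x_1,\dots,x_b$. *)

theory Defs
  imports Main "HOL-Library.Poly_Mapping"
begin

text \<open>Polynomials with integer coefficients in variables indexed by nat:
  a monomial is a finitely supported exponent vector (nat =>0 nat),
  a polynomial is a finitely supported coefficient map on monomials.
  Multiplication is the convolution product from Poly_Mapping.\<close>
type_synonym ipoly = "(nat \<Rightarrow>\<^sub>0 nat) \<Rightarrow>\<^sub>0 int"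

definition mon_deg :: "(nat \<Rightarrow>\<^sub>0 nat) \<Rightarrow> nat" where
  "mon_deg m = (\<Sum>i\<in>Poly_Mapping.keys m. Poly_Mapping.lookup m i)"

definition in_vars :: "nat \<Rightarrow> ipoly \<Rightarrow> bool" where
  "in_vars n p = (\<forall>m\<in>Poly_Mapping.keys p. Poly_Mapping.keys m \<subseteq> {1..n})"

text \<open>complete homogeneous symmetric polynomial h_a^b in x_1..x_b\<close>
definition hcomplete :: "nat \<Rightarrow> nat \<Rightarrow> ipoly" where
  "hcomplete a b = (\<Sum>m\<in>{m. Poly_Mapping.keys m \<subseteq> {1..b} \<and> mon_deg m = a}. Poly_Mapping.single m 1)"

definition ideal_gen :: "nat \<Rightarrow> ipoly list \<Rightarrow> ipoly set" where
  "ideal_gen n gs = {(\<Sum>i<length gs. c i * gs ! i) | c. \<forall>i<length gs. in_vars n (c i)}"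

end

theory Submission
  imports Defs
begin

definition S :: "nat \<Rightarrow> nat \<Rightarrow> (nat \<Rightarrow>\<^sub>0 nat) set" where
  "S a b = {m. Poly_Mapping.keys m \<subseteq> {1..b} \<and> mon_deg m = a}"

lemma mon_deg_sum:
  assumes "finite A" "Poly_Mapping.keys m \<subseteq> A"
  shows "mon_deg m = sum (Poly_Mapping.lookup m) A"
  unfolding mon_deg_def
  using assms by (intro sum.mono_neutral_left) (auto simp: in_keys_iff)

lemma finite_S: "finite (S a b)"
proof -
  have "Poly_Mapping.lookup ` S a b \<subseteq> {f. \<forall>x. (x \<in> {1..b} \<longrightarrow> f x \<in> {0..a}) \<and> (x \<notin> {1..b} \<longrightarrow> f x = 0)}"
  proof clarify
    fix m x assume m: "m \<in> S a b"
    then have k: "Poly_Mapping.keys m \<subseteq> {1..b}" and d: "mon_deg m = a" by (auto simp: S_def)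
    show "(x \<in> {1..b} \<longrightarrow> Poly_Mapping.lookup m x \<in> {0..a}) \<and> (x \<notin> {1..b} \<longrightarrow> Poly_Mapping.lookup m x = 0)"
    proof (intro conjI impI)
      assume "x \<in> {1..b}"
      then have "Poly_Mapping.lookup m x \<le> sum (Poly_Mapping.lookup m) {1..b}"
        by (intro member_le_sum) auto
      then show "Poly_Mapping.lookup m x \<in> {0..a}" using mon_deg_sum[OF _ k] d by simp
    next
      assume "x \<notin> {1..b}" then show "Poly_Mapping.lookup m x = 0" using k by (auto simp: in_keys_iff)
    qed
  qed
  then have "finite (Poly_Mapping.lookup ` S a b)"
    by (rule finite_subset) (intro finite_set_of_finite_funs; simp)
  moreover have "inj_on Poly_Mapping.lookup (S a b)"
    by (auto simp: inj_on_def poly_mapping_eqI)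
  ultimately show ?thesis by (rule finite_imageD)
qed

lemma hcomplete_S: "hcomplete a b = (\<Sum>m\<in>S a b. Poly_Mapping.single m 1)"
  by (simp add: hcomplete_def S_def)

lemma lookup_hcomplete: "Poly_Mapping.lookup (hcomplete a b) m = (if m \<in> S a b then 1 else 0)"
  unfolding hcomplete_S lookup_sum using finite_S
  by (simp add: lookup_single when_def)

lemma hcomplete_rec:
  assumes "n \<ge> 1" "a \<ge> 1"
  shows "hcomplete a n = hcomplete a (n - 1) + Poly_Mapping.single (Poly_Mapping.single n 1) 1 * hcomplete (a - 1) n"
proof -
  let ?e = "Poly_Mapping.single n (1::nat)"
  have deg_plus: "mon_deg (?e + m) = Suc (mon_deg m)" if "Poly_Mapping.keys m \<subseteq> {1..n}" for m
  proof -
    have "Poly_Mapping.keys (?e + m) \<subseteq> {1..n}"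
      using keys_add[of ?e m] that assms by auto
    then have "mon_deg (?e + m) = sum (Poly_Mapping.lookup (?e + m)) {1..n}" by (simp add: mon_deg_sum)
    also have "\<dots> = sum (Poly_Mapping.lookup ?e) {1..n} + sum (Poly_Mapping.lookup m) {1..n}"
      by (simp add: lookup_add sum.distrib)
    also have "sum (Poly_Mapping.lookup ?e) {1..n} = 1"
      using assms by (simp add: lookup_single when_def)
    finally show ?thesis using mon_deg_sum[OF _ that] by simp
  qed
  have inj: "inj_on ((+) ?e) (S (a - 1) n)" by (auto simp: inj_on_def)
  have disj: "S a (n - 1) \<inter> (+) ?e ` S (a - 1) n = {}"
  proof -
    { fix m assume "m \<in> S (a - 1) n" "?e + m \<in> S a (n - 1)"
      then have "Poly_Mapping.keys (?e + m) \<subseteq> {1..n-1}" by (auto simp: S_def)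
      then have "n \<notin> Poly_Mapping.keys (?e + m)" using assms by auto
      then have False by (simp add: in_keys_iff lookup_add) }
    then show ?thesis by blast
  qed
  have split: "S a n = S a (n - 1) \<union> (+) ?e ` S (a - 1) n"
  proof (intro equalityI subsetI)
    fix m assume m: "m \<in> S a n"
    show "m \<in> S a (n - 1) \<union> (+) ?e ` S (a - 1) n"
    proof (cases "Poly_Mapping.lookup m n = 0")
      case True
      have k1: "Poly_Mapping.keys m \<subseteq> {1..n}" using m by (auto simp: S_def)
      have k2: "n \<notin> Poly_Mapping.keys m" using True by (simp add: in_keys_iff)
      have "Poly_Mapping.keys m \<subseteq> {1..n-1}"
      proof
        fix x assume "x \<in> Poly_Mapping.keys m"
        with k1 k2 have "x \<in> {1..n}" "x \<noteq> n" by auto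
        then show "x \<in> {1..n-1}" by auto
      qed
      then show ?thesis using m by (auto simp: S_def)
    next
      case False
      define m' where "m' = m - ?e"
      have eq: "m = ?e + m'"
        using False by (intro poly_mapping_eqI) (auto simp: m'_def lookup_add lookup_minus lookup_single when_def)
      have k: "Poly_Mapping.keys m' \<subseteq> {1..n}"
        using m by (auto simp: S_def m'_def in_keys_iff lookup_minus)
      have "Suc (mon_deg m') = a" using deg_plus[OF k] eq m by (simp add: S_def)
      then have "mon_deg m' = a - 1" by simp
      then have "m' \<in> S (a - 1) n" using k by (simp add: S_def)
      then show ?thesis using eq by blast
    qed
  next
    fix m assume "m \<in> S a (n - 1) \<union> (+) ?e ` S (a - 1) n"
    then show "m \<in> S a n"
    proof
      assume "m \<in> S a (n - 1)" 
      moreover have "{1..n-1} \<subseteq> {1..n}" by auto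
      ultimately show ?thesis unfolding S_def by blast
    next
      assume "m \<in> (+) ?e ` S (a - 1) n"
      then obtain m' where m': "m' \<in> S (a - 1) n" "m = ?e + m'" by blast
      have "Poly_Mapping.keys m \<subseteq> {1..n}"
        using keys_add[of ?e m'] m' assms by (auto simp: S_def)
      moreover have "mon_deg m = a" using deg_plus[of m'] m' assms by (auto simp: S_def)
      ultimately show ?thesis by (simp add: S_def)
    qed
  qed
  have "Poly_Mapping.single ?e 1 * hcomplete (a - 1) n = (\<Sum>m\<in>S (a - 1) n. Poly_Mapping.single (?e + m) (1::int))"
    by (simp add: hcomplete_S sum_distrib_left mult_single)
  also have "\<dots> = (\<Sum>m\<in>(+) ?e ` S (a - 1) n. Poly_Mapping.single m 1)"
    by (simp only: sum.reindex[OF inj] o_def)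
  finally have X: "Poly_Mapping.single ?e 1 * hcomplete (a - 1) n = (\<Sum>m\<in>(+) ?e ` S (a - 1) n. Poly_Mapping.single m 1)" .
  show ?thesis
    unfolding X hcomplete_S[of a n] hcomplete_S[of a "n-1"] split
    by (rule sum.union_disjoint[OF finite_S finite_imageI[OF finite_S] disj])
qed

lemma in_vars_0: "in_vars n 0"
  by (simp add: in_vars_def)

lemma in_vars_1: "in_vars n 1"
  by (simp add: in_vars_def)

lemma in_vars_add: "in_vars n p \<Longrightarrow> in_vars n q \<Longrightarrow> in_vars n (p + q)"
  using keys_add[of p q] by (auto simp: in_vars_def)

lemma in_vars_uminus: "in_vars n p \<Longrightarrow> in_vars n (- p)"
  by (auto simp: in_vars_def in_keys_iff)

lemma in_vars_mult: "in_vars n p \<Longrightarrow> in_vars n q \<Longrightarrow> in_vars n (p * q)"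
proof (unfold in_vars_def, intro ballI)
  fix m assume p: "\<forall>m\<in>Poly_Mapping.keys p. Poly_Mapping.keys m \<subseteq> {1..n}"
    and q: "\<forall>m\<in>Poly_Mapping.keys q. Poly_Mapping.keys m \<subseteq> {1..n}"
    and m: "m \<in> Poly_Mapping.keys (p * q)"
  then obtain u v where "m = u + v" "u \<in> Poly_Mapping.keys p" "v \<in> Poly_Mapping.keys q"
    using keys_mult[of p q] by blast
  then show "Poly_Mapping.keys m \<subseteq> {1..n}" using p q keys_add[of u v] by blast
qed

lemma in_vars_hcomplete: "b \<le> n \<Longrightarrow> in_vars n (hcomplete a b)"
  unfolding in_vars_def
proof
  fix m assume b: "b \<le> n" and "m \<in> Poly_Mapping.keys (hcomplete a b)"
  then have "Poly_Mapping.keys m \<subseteq> {1..b}"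
    by (auto simp: in_keys_iff lookup_hcomplete S_def split: if_splits)
  moreover have "{1..b} \<subseteq> {1..n}" using b by auto
  ultimately show "Poly_Mapping.keys m \<subseteq> {1..n}" by blast
qed

lemma in_vars_X: "1 \<le> n \<Longrightarrow> in_vars n (Poly_Mapping.single (Poly_Mapping.single n 1) 1)"
  by (simp add: in_vars_def)

lemma ideal_gen_memI: "(\<forall>i<length gs. in_vars n (c i)) \<Longrightarrow> (\<Sum>i<length gs. c i * gs ! i) \<in> ideal_gen n gs"
  unfolding ideal_gen_def by blast

lemma ideal_gen_mem: "i < length gs \<Longrightarrow> gs ! i \<in> ideal_gen n gs"
proof -
  assume i: "i < length gs"
  let ?c = "\<lambda>j. if j = i then 1 else 0 :: ipoly"
  have "\<forall>j. ?c j * gs ! j = (if j = i then gs ! i else 0)" by simp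
  then have "(\<Sum>j<length gs. ?c j * gs ! j) = (\<Sum>j<length gs. (if j = i then gs ! i else 0))"
    by presburger
  also have "\<dots> = gs ! i" using i by (simp add: sum.delta)
  finally have e: "(\<Sum>j<length gs. ?c j * gs ! j) = gs ! i" .
  have "\<forall>j<length gs. in_vars n (?c j)" by (simp add: in_vars_0 in_vars_1)
  from ideal_gen_memI[OF this] show ?thesis unfolding e .
qed

lemma ideal_gen_0: "0 \<in> ideal_gen n gs"
  using ideal_gen_memI[of gs n "\<lambda>_. 0"] by (simp add: in_vars_0)

lemma ideal_gen_add: "p \<in> ideal_gen n gs \<Longrightarrow> q \<in> ideal_gen n gs \<Longrightarrow> p + q \<in> ideal_gen n gs"
proof -
  assume "p \<in> ideal_gen n gs" "q \<in> ideal_gen n gs"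
  then obtain c d where p: "p = (\<Sum>i<length gs. c i * gs ! i)" "\<forall>i<length gs. in_vars n (c i)"
    and q: "q = (\<Sum>i<length gs. d i * gs ! i)" "\<forall>i<length gs. in_vars n (d i)"
    unfolding ideal_gen_def by blast
  have "p + q = (\<Sum>i<length gs. (\<lambda>i. c i + d i) i * gs ! i)"
    by (simp add: p q distrib_right sum.distrib)
  moreover have "\<forall>i<length gs. in_vars n ((\<lambda>i. c i + d i) i)" using p q in_vars_add by simp
  ultimately show ?thesis using ideal_gen_memI[of gs n "\<lambda>i. c i + d i"] by simp
qed

lemma ideal_gen_mult: "in_vars n r \<Longrightarrow> p \<in> ideal_gen n gs \<Longrightarrow> r * p \<in> ideal_gen n gs"
proof -
  assume r: "in_vars n r" and "p \<in> ideal_gen n gs"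
  then obtain c where p: "p = (\<Sum>i<length gs. c i * gs ! i)" "\<forall>i<length gs. in_vars n (c i)"
    unfolding ideal_gen_def by blast
  have "r * p = (\<Sum>i<length gs. (\<lambda>i. r * c i) i * gs ! i)"
    by (simp add: p sum_distrib_left mult.assoc)
  moreover have "\<forall>i<length gs. in_vars n ((\<lambda>i. r * c i) i)" using p r in_vars_mult by simp
  ultimately show ?thesis using ideal_gen_memI[of gs n "\<lambda>i. r * c i"] by simp
qed

lemma ideal_gen_diff: "p \<in> ideal_gen n gs \<Longrightarrow> q \<in> ideal_gen n gs \<Longrightarrow> p - q \<in> ideal_gen n gs"
proof -
  assume p: "p \<in> ideal_gen n gs" and q: "q \<in> ideal_gen n gs"
  have "(-1) * q \<in> ideal_gen n gs"
    by (rule ideal_gen_mult[OF in_vars_uminus[OF in_vars_1] q])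
  then have "p + (-1) * q \<in> ideal_gen n gs" by (rule ideal_gen_add[OF p])
  then show ?thesis by simp
qed

lemma ideal_gen_sum: "finite A \<Longrightarrow> (\<forall>i\<in>A. f i \<in> ideal_gen n gs) \<Longrightarrow> sum f A \<in> ideal_gen n gs"
  by (induction A rule: finite_induct) (auto intro: ideal_gen_0 ideal_gen_add)

lemma ideal_gen_subset:
  assumes "\<forall>i<length gs. gs ! i \<in> ideal_gen n hs"
  shows "ideal_gen n gs \<subseteq> ideal_gen n hs"
proof
  fix p assume "p \<in> ideal_gen n gs"
  then obtain c where p: "p = (\<Sum>i<length gs. c i * gs ! i)" "\<forall>i<length gs. in_vars n (c i)"
    unfolding ideal_gen_def by blast
  show "p \<in> ideal_gen n hs" unfolding p(1)
    by (rule ideal_gen_sum) (use p(2) assms ideal_gen_mult in auto)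
qed

theorem proposition4p2:
  fixes n :: nat
  assumes "n \<ge> 1"
  shows "ideal_gen n (map (\<lambda>a. hcomplete a n) [1..<n+1])
       = ideal_gen n (hcomplete 1 n # map (\<lambda>a. hcomplete a (n - 1)) [2..<n+1])"
proof -
  let ?G = "map (\<lambda>a. hcomplete a n) [1..<n+1]"
  let ?H = "hcomplete 1 n # map (\<lambda>a. hcomplete a (n - 1)) [2..<n+1]"
  let ?X = "Poly_Mapping.single (Poly_Mapping.single n 1) 1 :: ipoly"
  have lG: "length ?G = n" by simp
  have lH: "length ?H = n" using assms by (cases n) auto
  have G_nth: "?G ! i = hcomplete (Suc i) n" if "i < n" for i
    using that by (simp del: upt_Suc add: nth_map_upt)
  have H_nth: "?H ! i = hcomplete (Suc i) (n - 1)" if iH: "i < n" "i \<ge> 1" for i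
  proof -
    obtain j where j: "i = Suc j" using iH by (cases i) auto
    then show ?thesis using iH by (simp del: upt_Suc add: nth_map_upt)
  qed
  have H0: "?H ! 0 = hcomplete 1 n" by simp
  have inH: "hcomplete a n \<in> ideal_gen n ?H" if "1 \<le> a" "a \<le> n" for a
    using that
  proof (induction a)
    case 0 then show ?case by simp
  next
    case (Suc k)
    show ?case
    proof (cases "k = 0")
      case True
      then show ?thesis using ideal_gen_mem[of 0 ?H n] lH assms by simp
    next
      case False
      have "hcomplete k n \<in> ideal_gen n ?H" using Suc False by simp
      then have A: "?X * hcomplete k n \<in> ideal_gen n ?H"
        by (rule ideal_gen_mult[OF in_vars_X[OF assms]])
      have B: "hcomplete (Suc k) (n - 1) \<in> ideal_gen n ?H"
        using ideal_gen_mem[of k ?H n] H_nth[of k] lH Suc False by simp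
      have "hcomplete (Suc k) n = hcomplete (Suc k) (n - 1) + ?X * hcomplete k n"
        using hcomplete_rec[of n "Suc k"] assms by simp
      then show ?thesis using ideal_gen_add[OF B A] by simp
    qed
  qed
  have inG: "hcomplete a (n - 1) \<in> ideal_gen n ?G" if "2 \<le> a" "a \<le> n" for a
  proof -
    have A: "hcomplete a n \<in> ideal_gen n ?G"
      using ideal_gen_mem[of "a - 1" ?G n] G_nth[of "a - 1"] that by simp
    have "hcomplete (a - 1) n \<in> ideal_gen n ?G"
      using ideal_gen_mem[of "a - 2" ?G n] G_nth[of "a - 2"] that
      by (simp add: Suc_diff_Suc numeral_2_eq_2)
    then have B: "?X * hcomplete (a - 1) n \<in> ideal_gen n ?G"
      by (rule ideal_gen_mult[OF in_vars_X[OF assms]])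
    have "hcomplete a (n - 1) = hcomplete a n - ?X * hcomplete (a - 1) n"
      using hcomplete_rec[of n a] assms that by simp
    then show ?thesis using ideal_gen_diff[OF A B] by simp
  qed
  show ?thesis
  proof
    show "ideal_gen n ?G \<subseteq> ideal_gen n ?H"
    proof (rule ideal_gen_subset, intro allI impI)
      fix i assume i: "i < length ?G"
      then have "i < n" using lG by simp
      then show "?G ! i \<in> ideal_gen n ?H" unfolding G_nth[OF \<open>i < n\<close>] by (intro inH) auto
    qed
  next
    show "ideal_gen n ?H \<subseteq> ideal_gen n ?G"
    proof (rule ideal_gen_subset, intro allI impI)
      fix i assume i: "i < length ?H"
      show "?H ! i \<in> ideal_gen n ?G"
      proof (cases "i = 0")
        case True
        have "?G ! 0 \<in> ideal_gen n ?G" using ideal_gen_mem[of 0 ?G n] assms lG by simp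
        then show ?thesis using True G_nth[of 0] assms by simp
      next
        case False
        then show ?thesis using H_nth[of i] inG[of "Suc i"] i lH by simp
      qed
    qed
  qed
qed

end
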